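(* Let $L\ge 2$ be an integer. For $\theta_1,\dots,\theta_L\in[0,2\pi)$, let $\theta_{(1)}\le\dots\le\theta_{(L)}$ be their sorted values, and let $\angle_k=\theta_{(k+1)}-\theta_{(k)}$ for $1\le k<L$, $\angle_L=2\pi-(\theta_{(L)}-\theta_{(1)})$. Define $$D(\theta_1,\dots,\theta_L)=\sum_{i=1}^{L-1}\sum_{j=i+1}^{L}\sin^2\Big(\sum_{k=i}^{j-1}\angle_k\Big).$$ Then the maximum of $D$ over all $(\theta_1,\dots,\theta_L)\in[0,2\pi)^L$ exists and equals $L^2/4$. *)

theory Defs
  imports Complex_Main
begin

definition sorted_ang :: "real list \<Rightarrow> nat \<Rightarrow> real" where
  "sorted_ang th k = sort th ! (k - 1)"

definition gap_ang :: "real list \<Rightarrow> nat \<Rightarrow> real" where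
  "gap_ang th k =
     (if k < length th then sorted_ang th (k + 1) - sorted_ang th k
      else 2 * pi - (sorted_ang th (length th) - sorted_ang th 1))"

definition Dfun :: "real list \<Rightarrow> real" where
  "Dfun th = (\<Sum>i = 1..length th - 1. \<Sum>j = i + 1..length th.
                 (sin (\<Sum>k = i..j - 1. gap_ang th k))\<^sup>2)"

end

theory Submission
  imports Defs "HOL-Library.Multiset"
begin

lemma sin_sq_diff: "(sin ((x::real) - y))^2 = 1/2 - (cos (2*x) * cos (2*y) + sin (2*x) * sin (2*y))/2"
proof -
  have "cos (2*(x-y)) = 1 - 2*(sin (x-y))^2" by (rule cos_double_sin)
  then have "(sin (x - y))^2 = (1 - cos (2*(x-y)))/2" by simp
  also have "cos (2*(x-y)) = cos (2*x - 2*y)" by (simp add: algebra_simps)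
  also have "\<dots> = cos (2*x) * cos (2*y) + sin (2*x) * sin (2*y)" by (rule cos_diff)
  finally show ?thesis by (simp add: diff_divide_distrib)
qed

lemma key:
  fixes b :: "nat \<Rightarrow> real"
  shows "(\<Sum>i=1..n. \<Sum>j=i+1..n. (sin (b j - b i))^2) =
    real n^2/4 - ((\<Sum>i=1..n. cos(2*b i))^2 + (\<Sum>i=1..n. sin(2*b i))^2)/4"
proof (induction n)
  case 0
  then show ?case by simp
next
  case (Suc n)
  define C where "C = (\<Sum>i=1..n. cos(2*b i))"
  define S where "S = (\<Sum>i=1..n. sin(2*b i))"
  have inner: "(\<Sum>j=i+1..Suc n. (sin (b j - b i))^2) = (\<Sum>j=i+1..n. (sin (b j - b i))^2) + (sin (b (Suc n) - b i))^2"
    if "i \<in> {1..n}" for i using that by (simp add: sum.cl_ivl_Suc)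
  have "(\<Sum>i=1..Suc n. \<Sum>j=i+1..Suc n. (sin (b j - b i))^2)
      = (\<Sum>i=1..n. \<Sum>j=i+1..Suc n. (sin (b j - b i))^2)"
    by (simp add: sum.cl_ivl_Suc)
  also have "\<dots> = (\<Sum>i=1..n. \<Sum>j=i+1..n. (sin (b j - b i))^2) + (\<Sum>i=1..n. (sin (b (Suc n) - b i))^2)"
    by (simp add: inner sum.distrib)
  also have "(\<Sum>i=1..n. (sin (b (Suc n) - b i))^2) = (\<Sum>i=1..n. 1/2 - (cos (2*b (Suc n)) * cos (2*b i) + sin (2*b (Suc n)) * sin (2*b i))/2)"
    by (simp add: sin_sq_diff)
  also have "\<dots> = real n/2 - (cos (2*b (Suc n)) * C + sin (2*b (Suc n)) * S)/2"
    by (simp add: C_def S_def sum_subtractf sum_divide_distrib[symmetric] sum.distrib sum_distrib_left)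
  finally have E: "(\<Sum>i=1..Suc n. \<Sum>j=i+1..Suc n. (sin (b j - b i))^2) =
     (\<Sum>i=1..n. \<Sum>j=i+1..n. (sin (b j - b i))^2) + (real n/2 - (cos (2*b (Suc n)) * C + sin (2*b (Suc n)) * S)/2)" .
  have IH: "(\<Sum>i=1..n. \<Sum>j=i+1..n. (sin (b j - b i))^2) = real n^2/4 - (C^2 + S^2)/4"
    using Suc.IH unfolding C_def S_def .
  have C1: "(\<Sum>i=1..Suc n. cos(2*b i)) = C + cos (2*b (Suc n))" by (simp add: C_def)
  have S1: "(\<Sum>i=1..Suc n. sin(2*b i)) = S + sin (2*b (Suc n))" by (simp add: S_def)
  have P: "(sin (2*b (Suc n)))^2 + (cos (2*b (Suc n)))^2 = 1" by simp
  show ?case unfolding E IH C1 S1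
    using P by (simp add: power2_eq_square algebra_simps add_divide_distrib diff_divide_distrib)
qed

lemma gap_sum:
  assumes "1 \<le> i" "i + d + 1 \<le> length th"
  shows "(\<Sum>k=i..i+d. gap_ang th k) = sorted_ang th (i+d+1) - sorted_ang th i"
  using assms
proof (induction d)
  case 0
  then show ?case by (simp add: gap_ang_def)
next
  case (Suc d)
  then show ?case by (simp add: gap_ang_def)
qed

lemma Dfun_eq:
  assumes "length th \<ge> 1"
  shows "Dfun th = (\<Sum>i=1..length th. \<Sum>j=i+1..length th. (sin (sorted_ang th j - sorted_ang th i))^2)"
proof -
  let ?L = "length th"
  have "Dfun th = (\<Sum>i=1..?L - 1. \<Sum>j=i+1..?L. (sin (sorted_ang th j - sorted_ang th i))^2)"
    unfolding Dfun_def
  proof (intro sum.cong refl)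
    fix i j assume i: "i \<in> {1..?L - 1}" and j: "j \<in> {i+1..?L}"
    have "(\<Sum>k=i..j-1. gap_ang th k) = (\<Sum>k=i..i+(j-1-i). gap_ang th k)" using j by simp
    also have "\<dots> = sorted_ang th (i+(j-1-i)+1) - sorted_ang th i"
      using i j by (intro gap_sum) auto
    also have "i+(j-1-i)+1 = j" using j by auto
    finally show "(sin (\<Sum>k=i..j-1. gap_ang th k))^2 = (sin (sorted_ang th j - sorted_ang th i))^2" by simp
  qed
  also have "\<dots> = (\<Sum>i=1..?L. \<Sum>j=i+1..?L. (sin (sorted_ang th j - sorted_ang th i))^2)"
  proof -
    have "{1..?L} = insert ?L {1..?L - 1}" using assms by auto
    moreover have "?L \<notin> {1..?L - 1}" using assms by auto
    ultimately show ?thesis by (simp add: sum.insert)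
  qed
  finally show ?thesis .
qed

lemma sum_sorted: "(\<Sum>i=1..length th. f (sorted_ang th i)) = sum_list (map f th)"
proof -
  have "(\<Sum>i=1..length th. f (sorted_ang th i)) = (\<Sum>i=0..<length th. f (sort th ! i))"
    unfolding sorted_ang_def
    by (simp add: sum.atLeast1_atMost_eq atLeast0LessThan)
  also have "\<dots> = sum_list (map f (sort th))" by (simp add: sum_list_sum_nth)
  also have "\<dots> = sum_list (map f th)"
    by (metis mset_map mset_sort sum_mset_sum_list)
  finally show ?thesis .
qed

lemma Dfun_formula:
  assumes "length th \<ge> 1"
  shows "Dfun th = real (length th)^2/4 - ((sum_list (map (\<lambda>x. cos (2*x)) th))^2 + (sum_list (map (\<lambda>x. sin (2*x)) th))^2)/4"
  using Dfun_eq[OF assms] key[of "sorted_ang th" "length th"]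
    sum_sorted[of "\<lambda>x. cos (2*x)" th] sum_sorted[of "\<lambda>x. sin (2*x)" th]
  by simp

theorem lemma2:
  fixes L :: nat
  assumes "L \<ge> 2"
  shows "(\<exists>th. length th = L \<and> set th \<subseteq> {0..<2 * pi} \<and> Dfun th = real L ^ 2 / 4) \<and>
         (\<forall>th. length th = L \<and> set th \<subseteq> {0..<2 * pi} \<longrightarrow> Dfun th \<le> real L ^ 2 / 4)"
proof
  show "\<forall>th. length th = L \<and> set th \<subseteq> {0..<2 * pi} \<longrightarrow> Dfun th \<le> real L ^ 2 / 4"
  proof (intro allI impI)
    fix th :: "real list" assume "length th = L \<and> set th \<subseteq> {0..<2 * pi}"
    then show "Dfun th \<le> real L ^ 2 / 4" using assms Dfun_formula[of th]
      by (simp add: add_nonneg_nonneg)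
  qed
next
  show "\<exists>th. length th = L \<and> set th \<subseteq> {0..<2 * pi} \<and> Dfun th = real L ^ 2 / 4"
  proof (cases "even L")
    case True
    then obtain m where m: "L = 2*m" by auto
    define th where "th = replicate m 0 @ replicate m (pi/2)"
    have "length th = L" using m by (simp add: th_def)
    moreover have "set th \<subseteq> {0..<2 * pi}"
    proof -
      have "set th \<subseteq> {0, pi/2}" by (auto simp: th_def)
      moreover have "{0, pi/2} \<subseteq> {0..<2*pi}" using pi_gt_zero by auto
      ultimately show ?thesis by blast
    qed
    moreover have "Dfun th = real L ^ 2 / 4"
    proof -
      have "sum_list (map (\<lambda>x. cos (2*x)) th) = 0" by (simp add: th_def sum_list_replicate)
      moreover have "sum_list (map (\<lambda>x. sin (2*x)) th) = 0" by (simp add: th_def sum_list_replicate)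
      ultimately show ?thesis using Dfun_formula[of th] assms \<open>length th = L\<close> by simp
    qed
    ultimately show ?thesis by blast
  next
    case False
    have "L = 2*(L div 2) + 1" using False by presburger
    moreover have "L div 2 \<ge> 1" using assms by auto
    ultimately have m: "L = 2*(L div 2 - 1) + 3" by linarith
    define m where "m = L div 2 - 1"
    note m = m[folded m_def]
    define th where "th = [0, pi/3, 2*pi/3] @ replicate m 0 @ replicate m (pi/2)"
    have "length th = L" using m by (simp add: th_def)
    moreover have "set th \<subseteq> {0..<2 * pi}"
    proof -
      have "set th \<subseteq> {0, pi/3, 2*pi/3, pi/2}" by (auto simp: th_def)
      moreover have "{0, pi/3, 2*pi/3, pi/2} \<subseteq> {0..<2*pi}" using pi_gt_zero by auto
      ultimately show ?thesis by blast
    qed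
    have c: "cos (4*pi/3) = -1/2"
    proof -
      have e: "4*pi/3 = pi/3 + pi" by simp
      show ?thesis unfolding e cos_periodic_pi cos_60 by simp
    qed
    have s: "sin (4*pi/3) = - sqrt 3/2"
    proof -
      have e: "4*pi/3 = pi/3 + pi" by simp
      show ?thesis unfolding e sin_periodic_pi sin_60 by simp
    qed
    have c1: "cos (2*pi/3) = -1/2" using cos_120 by simp
    have s1: "sin (2*pi/3) = sqrt 3/2" using sin_120 by simp
    have "Dfun th = real L ^ 2 / 4"
    proof -
      have "sum_list (map (\<lambda>x. cos (2*x)) th) = 0" by (simp add: th_def sum_list_replicate c c1)
      moreover have "sum_list (map (\<lambda>x. sin (2*x)) th) = 0" by (simp add: th_def sum_list_replicate s s1)
      ultimately show ?thesis using Dfun_formula[of th] assms \<open>length th = L\<close> by simp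
    qed
    then show ?thesis using \<open>length th = L\<close> \<open>set th \<subseteq> _\<close> by blast
  qed
qed

end
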